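(* For every $n\in\mathbb N$ there exists an $n$-saturated closed graph on the Cantor space $2^\omega$; that is, there is a graph $G$ with vertex set $V(G)=2^\omega$ whose edge relation $E(G)$ is a closed subset of $2^\omega\times 2^\omega$ and which is $n$-saturated.
   Context: A graph is a pair $G=(V(G),E(G))$ where $V(G)$ is a non-empty set and $E(G)\subseteq V(G)\times V(G)$ is a symmetric and reflexive relation (every vertex has a loop). A graph on a topological space $X$ is closed if its edge relation is a closed subset of $X^2$. For $A\subseteq V(G)$, a type over $A$ is a function $f\colon A\to\{0,1\}$; a vertex $v\in V(G)\setminus A$ realizes $f$ if for every $a\in A$, $(a,v)\in E(G)$ if and only if $f(a)=1$. The graph $G$ is $n$-saturated if for every $A\subseteq V(G)$ with $|A|<n$ and every type $f\in\{0,1\}^A$ there is a vertex $x\in V(G)\setminus A$ realizing $f$. The Cantor space $2^\omega=\{0,1\}^{\mathbb N}$ carries the product topology. *)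

theory Defs
  imports "HOL-Analysis.Analysis"
begin

definition cantor_topology :: "(nat \<Rightarrow> bool) topology" where
  "cantor_topology = product_topology (\<lambda>_. discrete_topology (UNIV :: bool set)) UNIV"

definition is_graph :: "'a set \<Rightarrow> ('a \<times> 'a) set \<Rightarrow> bool" where
  "is_graph V E \<longleftrightarrow> V \<noteq> {} \<and> E \<subseteq> V \<times> V \<and> (\<forall>v\<in>V. (v, v) \<in> E)
     \<and> (\<forall>u v. (u, v) \<in> E \<longrightarrow> (v, u) \<in> E)"

definition realizes :: "('a \<times> 'a) set \<Rightarrow> 'a set \<Rightarrow> ('a \<Rightarrow> bool) \<Rightarrow> 'a \<Rightarrow> bool" where
  "realizes E A f v \<longleftrightarrow> v \<notin> A \<and> (\<forall>a\<in>A. ((a, v) \<in> E \<longleftrightarrow> f a))"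

definition n_saturated :: "nat \<Rightarrow> 'a set \<Rightarrow> ('a \<times> 'a) set \<Rightarrow> bool" where
  "n_saturated n V E \<longleftrightarrow>
     (\<forall>A f. A \<subseteq> V \<and> finite A \<and> card A < n \<longrightarrow> (\<exists>v\<in>V. realizes E A f v))"

end

theory Submission
  imports Defs
begin


abbreviation "PT \<equiv> prod_topology cantor_topology cantor_topology"

lemma topspace_cantor[simp]: "topspace cantor_topology = UNIV"
  by (simp add: cantor_topology_def)

lemma topspace_PT[simp]: "topspace PT = UNIV"
  by (simp add: topspace_prod_topology)

lemma openin_coord: "openin cantor_topology {x. x i = b}"
proof -
  have "continuous_map cantor_topology (discrete_topology (UNIV::bool set)) (\<lambda>x. x i)"
    unfolding cantor_topology_def by (rule continuous_map_product_projection) simp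
  from openin_continuous_map_preimage[OF this, of "{b}"]
  show ?thesis by simp
qed

lemma openin_fst: "openin PT {q. fst q i = b}"
proof -
  have "{q. fst q i = b} = {q \<in> topspace PT. fst q \<in> {x. x i = b}}" by simp
  also have "openin PT \<dots>"
    by (rule openin_continuous_map_preimage[OF continuous_map_fst openin_coord])
  finally show ?thesis .
qed

lemma openin_snd: "openin PT {q. snd q i = b}"
proof -
  have "{q. snd q i = b} = {q \<in> topspace PT. snd q \<in> {x. x i = b}}" by simp
  also have "openin PT \<dots>"
    by (rule openin_continuous_map_preimage[OF continuous_map_snd openin_coord])
  finally show ?thesis .
qed

lemma closed_finite_dep:
  assumes fin: "finite F"
    and dep: "\<And>x y x' y'. (\<forall>i\<in>F. x i = x' i \<and> y i = y' i) \<Longrightarrow> ((x,y) \<in> S \<longleftrightarrow> (x',y') \<in> S)"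
  shows "closedin PT S"
proof -
  have "openin PT (- S)"
  proof (subst openin_subopen, intro ballI)
    fix p assume p: "p \<in> - S"
    obtain x y where pxy: "p = (x,y)" by fastforce
    let ?T = "(\<Inter>i\<in>F. {q. fst q i = x i} \<inter> {q. snd q i = y i}) \<inter> topspace PT"
    have "openin PT ?T"
      using fin by (intro openin_INT openin_Int openin_fst openin_snd) auto
    moreover have "p \<in> ?T" using pxy by auto
    moreover have "?T \<subseteq> - S"
    proof
      fix q assume q: "q \<in> ?T"
      obtain x' y' where qxy: "q = (x',y')" by fastforce
      have "\<forall>i\<in>F. x i = x' i \<and> y i = y' i" using q qxy by auto
      from dep[OF this] p pxy qxy show "q \<in> - S" by auto
    qed
    ultimately show "\<exists>T. openin PT T \<and> p \<in> T \<and> T \<subseteq> - S" by blast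
  qed
  then show ?thesis unfolding closedin_def by (simp add: Compl_eq_Diff_UNIV)
qed



definition dpos :: "nat \<Rightarrow> nat \<Rightarrow> nat \<Rightarrow> nat" where
  "dpos i c t = 2 * prod_encode (i, prod_encode (c, t))"
definition cpos :: "bool list \<Rightarrow> nat" where
  "cpos s = 2 * to_nat s + 1"
definition dig :: "(nat \<Rightarrow> bool) \<Rightarrow> nat \<Rightarrow> nat \<Rightarrow> nat" where
  "dig x i c = of_bool (x (dpos i c 0)) + of_bool (x (dpos i c 1))"
definition beatv :: "nat \<Rightarrow> (nat \<Rightarrow> nat) \<Rightarrow> (nat \<Rightarrow> nat) \<Rightarrow> bool" where
  "beatv r X Y \<longleftrightarrow> (\<exists>j<r. \<forall>c<r. X c = (if c = j then (Y c + 1) mod 3 else Y c))"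
definition cls :: "nat \<Rightarrow> nat \<Rightarrow> (nat\<Rightarrow>bool) \<Rightarrow> (nat\<Rightarrow>bool) \<Rightarrow> bool" where
  "cls r i x y \<longleftrightarrow> (beatv r (dig x i) (dig y i) \<longrightarrow> x (cpos (map y [0..<i])))
     \<and> (beatv r (dig y i) (dig x i) \<longrightarrow> y (cpos (map x [0..<i])))"
definition Eg :: "nat \<Rightarrow> ((nat\<Rightarrow>bool) \<times> (nat\<Rightarrow>bool)) set" where
  "Eg r = {(x,y). \<forall>i. cls r i x y}"

lemma mod3_ne: "(x::nat) \<noteq> (x + 1) mod 3 \<and> x \<noteq> ((x+1) mod 3 + 1) mod 3"
proof (cases "x < 3")
  case True then have "x = 0 \<or> x = 1 \<or> x = 2" by auto
  then show ?thesis by auto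
next
  case False
  have "(x + 1) mod 3 < 3" "((x+1) mod 3 + 1) mod 3 < 3" by auto
  then show ?thesis using False by linarith
qed

lemma beatv_irrefl: "\<not> beatv r X X"
  unfolding beatv_def using mod3_ne by fastforce

lemma Eg_graph: "is_graph UNIV (Eg r)"
  unfolding is_graph_def Eg_def cls_def by (auto simp: beatv_irrefl)

lemma cls_closed: "closedin PT {(x,y). cls r i x y}"
proof (rule closed_finite_dep)
  let ?F = "{dpos i c t | c t. c < r \<and> t < 2} \<union> {..<i} \<union> cpos ` {s. set s \<subseteq> UNIV \<and> length s = i}"
  have "{dpos i c t | c t. c < r \<and> t < 2} = (\<lambda>(c,t). dpos i c t) ` ({..<r} \<times> {..<2})" by auto
  then have "finite {dpos i c t | c t. c < r \<and> t < 2}" by simp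
  then show "finite ?F" using finite_lists_length_eq[of "UNIV::bool set" i] by simp
  fix x y x' y' :: "nat \<Rightarrow> bool"
  assume agree: "\<forall>k\<in>?F. x k = x' k \<and> y k = y' k"
  have dx: "\<And>c. c < r \<Longrightarrow> dig x i c = dig x' i c" and dy: "\<And>c. c < r \<Longrightarrow> dig y i c = dig y' i c"
    unfolding dig_def using agree by fastforce+
  have bxy: "beatv r (dig x i) (dig y i) = beatv r (dig x' i) (dig y' i)"
   and byx: "beatv r (dig y i) (dig x i) = beatv r (dig y' i) (dig x' i)"
    unfolding beatv_def using dx dy by auto
  have my: "map y [0..<i] = map y' [0..<i]" and mx: "map x [0..<i] = map x' [0..<i]"
    using agree by auto
  have "x (cpos (map y [0..<i])) = x' (cpos (map y [0..<i]))"
    using agree by auto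
  moreover have "y (cpos (map x [0..<i])) = y' (cpos (map x [0..<i]))"
    using agree by auto
  ultimately show "((x, y) \<in> {(x,y). cls r i x y}) = ((x', y') \<in> {(x,y). cls r i x y})"
    unfolding cls_def using bxy byx by (simp only: mx my mem_Collect_eq case_prod_conv)
qed

lemma Eg_closed: "closedin PT (Eg r)"
proof -
  have "Eg r = (\<Inter>i\<in>UNIV. {(x,y). cls r i x y})" unfolding Eg_def by auto
  then show ?thesis using cls_closed by auto
qed



definition bump :: "(nat \<Rightarrow> nat) \<Rightarrow> nat \<Rightarrow> nat \<Rightarrow> nat" where
  "bump \<beta> j = (\<lambda>c. if c = j then (\<beta> c + 1) mod 3 else \<beta> c)"

lemma beatv_bump: "j < r \<Longrightarrow> beatv r (bump \<beta> j) \<beta>"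
  unfolding beatv_def bump_def by auto

lemma bad_small: "card {j. j < r \<and> beatv r X (bump \<beta> j)} \<le> 2"
proof (cases "{j. j < r \<and> beatv r X (bump \<beta> j)} = {}")
  case True show ?thesis unfolding True by simp
next
  case False
  then obtain j0 where j0: "j0 < r" "beatv r X (bump \<beta> j0)" by auto
  then obtain j0' where j0': "j0' < r" "\<forall>c<r. X c = (if c = j0' then (bump \<beta> j0 c + 1) mod 3 else bump \<beta> j0 c)"
    unfolding beatv_def by auto
  have "{j. j < r \<and> beatv r X (bump \<beta> j)} \<subseteq> {j0, j0'}"
  proof
    fix j assume "j \<in> {j. j < r \<and> beatv r X (bump \<beta> j)}"
    then have jr: "j < r" and "beatv r X (bump \<beta> j)" by auto
    then obtain j' where j': "j' < r" "\<forall>c<r. X c = (if c = j' then (bump \<beta> j c + 1) mod 3 else bump \<beta> j c)"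
      unfolding beatv_def by auto
    show "j \<in> {j0, j0'}"
    proof (rule ccontr)
      assume "j \<notin> {j0, j0'}"
      then have "X j = \<beta> j" using j0'(2) jr by (auto simp: bump_def)
      moreover have "X j = (\<beta> j + 1) mod 3 \<or> X j = ((\<beta> j + 1) mod 3 + 1) mod 3"
        using j'(2) jr by (auto simp: bump_def split: if_splits)
      ultimately show False using mod3_ne[of "\<beta> j"] by simp
    qed
  qed
  then have "card {j. j < r \<and> beatv r X (bump \<beta> j)} \<le> card {j0, j0'}"
    by (intro card_mono) auto
  also have "\<dots> \<le> 2" by (simp add: card_insert_if)
  finally show ?thesis .
qed

lemma choose_bump:
  assumes fin: "finite A" and small: "2 * card A < r"
  shows "\<exists>j<r. \<forall>a\<in>A. \<not> beatv r (W a) (bump \<beta> j)"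
proof -
  let ?B = "\<lambda>a. {j. j < r \<and> beatv r (W a) (bump \<beta> j)}"
  have "card (\<Union>a\<in>A. ?B a) \<le> (\<Sum>a\<in>A. card (?B a))" by (rule card_UN_le[OF fin])
  also have "\<dots> \<le> (\<Sum>a\<in>A. 2)" by (rule sum_mono) (rule bad_small)
  also have "\<dots> = 2 * card A" by simp
  finally have "card (\<Union>a\<in>A. ?B a) < card {..<r}" using small by simp
  moreover have "finite (\<Union>a\<in>A. ?B a)" by (rule finite_subset[of _ "{..<r}"]) auto
  ultimately have "\<not> {..<r} \<subseteq> (\<Union>a\<in>A. ?B a)"
    using card_mono by (metis not_le)
  then show ?thesis by auto
qed



lemma dig_le: "dig x i c \<le> 2" unfolding dig_def by simp

lemma sat:
  assumes fin: "finite A" and cardA: "card A < n"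
  shows "\<exists>v. realizes (Eg (2*n+1)) A f v"
proof (cases "A = {}")
  case True then show ?thesis unfolding realizes_def by auto
next
  case False
  define r where "r = 2*n+1"
  obtain as where as: "set as = A" "distinct as" using finite_distinct_list[OF fin] by blast
  define L where "L = length as"
  have L0: "0 < L" using False as unfolding L_def by auto
  define tg where "tg i = as ! (i mod L)" for i
  have tgA: "tg i \<in> A" for i using as L0 unfolding tg_def L_def by auto
  have small: "2 * card A < r" using cardA unfolding r_def by simp
  define J where "J i = (SOME j. j < r \<and> (\<forall>a\<in>A. \<not> beatv r (dig a i) (bump (dig (tg i) i) j)))" for i
  have J: "J i < r \<and> (\<forall>a\<in>A. \<not> beatv r (dig a i) (bump (dig (tg i) i) (J i)))" for i
    unfolding J_def by (rule someI_ex) (use choose_bump[OF fin small, where W="\<lambda>a. dig a i" and \<beta>="dig (tg i) i"] in blast)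
  define U where "U i = bump (dig (tg i) i) (J i)" for i
  have Ule: "U i c \<le> 2" for i c unfolding U_def bump_def using dig_le by auto
  define Pref where "Pref = {map a [0..<i] | a i. a \<in> A \<and> f a}"
  define v where "v p = (if even p then (case prod_decode (p div 2) of (i, ct) \<Rightarrow>
        (case prod_decode ct of (c, t) \<Rightarrow> t < U i c)) else from_nat (p div 2) \<in> Pref)" for p
  have vd: "v (dpos i c t) = (t < U i c)" for i c t
    unfolding v_def dpos_def by simp
  have vc: "v (cpos s) = (s \<in> Pref)" for s
    unfolding v_def cpos_def by simp
  have digv: "dig v i = U i" for i
  proof
    fix c
    have "U i c = 0 \<or> U i c = 1 \<or> U i c = 2" using Ule[of i c] by auto
    then show "dig v i c = U i c" unfolding dig_def vd by auto
  qed
  have never: "\<not> beatv r (dig a i) (dig v i)" if "a \<in> A" for a i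
    using J that unfolding digv U_def by blast
  have beats: "beatv r (dig v i) (dig (tg i) i)" for i
    unfolding digv U_def using J by (intro beatv_bump) blast
  obtain N where N: "\<forall>a\<in>A. \<forall>a'\<in>A. a \<noteq> a' \<longrightarrow> (\<exists>p<N. a p \<noteq> a' p)"
  proof -
    define P where "P = {(a,a'). a \<in> A \<and> a' \<in> A \<and> a \<noteq> a'}"
    define g where "g = (\<lambda>(a::nat\<Rightarrow>bool,a'::nat\<Rightarrow>bool). SOME p. a p \<noteq> a' p)"
    have "finite P" unfolding P_def by (rule finite_subset[of _ "A \<times> A"]) (use fin in auto)
    then have "finite (g ` P)" by simp
    then obtain m where m: "\<forall>x\<in>g ` P. x < m" using finite_nat_set_iff_bounded by blast
    have "\<exists>p<m. a p \<noteq> a' p" if "a \<in> A" "a' \<in> A" "a \<noteq> a'" for a a'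
    proof -
      have "\<exists>p. a p \<noteq> a' p" using that by auto
      then have "a (g (a,a')) \<noteq> a' (g (a,a'))" unfolding g_def by (simp only: case_prod_conv) (rule someI_ex)
      moreover have "g (a,a') < m" using m that unfolding P_def by auto
      ultimately show ?thesis by blast
    qed
    then show ?thesis using that by blast
  qed
  have Eiff: "(a, v) \<in> Eg r \<longleftrightarrow> (\<forall>i. beatv r (dig v i) (dig a i) \<longrightarrow> map a [0..<i] \<in> Pref)" if "a \<in> A" for a
    unfolding Eg_def cls_def using never[OF that] vc by auto
  show ?thesis
  proof (intro exI[of _ v], unfold realizes_def r_def[symmetric], intro conjI ballI)
    show "v \<notin> A"
    proof
      assume "v \<in> A"
      then obtain k where k: "k < L" "as ! k = v" using as unfolding L_def by (metis in_set_conv_nth)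
      have "tg k = v" unfolding tg_def using k by simp
      then show False using beats[of k] beatv_irrefl by metis
    qed
  next
    fix a assume aA: "a \<in> A"
    then obtain k where k: "k < L" "as ! k = a" using as unfolding L_def by (metis in_set_conv_nth)
    show "((a, v) \<in> Eg r) = f a"
    proof
      assume adj: "(a, v) \<in> Eg r"
      show "f a"
      proof (rule ccontr)
        assume nf: "\<not> f a"
        define i where "i = k + L * N"
        have "i mod L = k" unfolding i_def using k by simp
        then have "tg i = a" unfolding tg_def using k by simp
        then have "map a [0..<i] \<in> Pref" using adj Eiff[OF aA] beats[of i] by auto
        then obtain a' i' where a': "a' \<in> A" "f a'" "map a [0..<i] = map a' [0..<i']"
          unfolding Pref_def by auto
        then have ii: "i' = i" by (metis length_map length_upt minus_nat.diff_0)
        have "a \<noteq> a'" using nf a' by auto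
        then obtain p where p: "p < N" "a p \<noteq> a' p" using N aA a' by blast
        have "1 * N \<le> L * N" by (rule mult_le_mono1) (use L0 in simp)
        then have "N \<le> i" unfolding i_def by linarith
        then have "p < i" using p by simp
        then have "a p = a' p" using a'(3) ii by (metis add_0 diff_zero length_upt nth_map nth_upt)
        then show False using p by simp
      qed
    next
      assume "f a"
      then have "map a [0..<i] \<in> Pref" for i unfolding Pref_def using aA by auto
      then show "(a, v) \<in> Eg r" using Eiff[OF aA] by auto
    qed
  qed
qed


theorem theorem1:
  fixes n :: nat
  shows "\<exists>E :: ((nat \<Rightarrow> bool) \<times> (nat \<Rightarrow> bool)) set.
           is_graph UNIV E
         \<and> closedin (prod_topology cantor_topology cantor_topology) E
         \<and> n_saturated n UNIV E"
proof (intro exI[of _ "Eg (2*n+1)"] conjI)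
  show "is_graph UNIV (Eg (2*n+1))" by (rule Eg_graph)
  show "closedin (prod_topology cantor_topology cantor_topology) (Eg (2*n+1))" by (rule Eg_closed)
  show "n_saturated n UNIV (Eg (2*n+1))"
    unfolding n_saturated_def using sat by blast
qed

end
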